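(* For $\alpha=(\alpha_1,\dots,\alpha_r)$ with $1\ge\alpha_1\ge\dots\ge\alpha_r\ge0$ and $\sum_{i=1}^r\alpha_i=1$ (where $r$ may vary), let $H(\alpha)=-\sum_{i=1}^r\alpha_i\log\alpha_i$ and $H'(\alpha)=-\sum_{i=2}^r\alpha_i\log\alpha_i$. Then $$\lim_{\alpha_1\uparrow 1}\frac{H'(\alpha)}{H(\alpha)}=1\qquad\text{and}\qquad\lim_{\alpha_1\downarrow 0}\frac{H'(\alpha)}{H(\alpha)}=1,$$ uniformly over the remaining coordinates.
   Context: $\log$ is the natural logarithm, with the convention $0\log 0=0$. *)

theory Defs
  imports Complex_Main
begin

definition sorted_prob_vec :: "nat \<Rightarrow> (nat \<Rightarrow> real) \<Rightarrow> bool" where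
  "sorted_prob_vec r a \<longleftrightarrow> r \<ge> 1 \<and> a 1 \<le> 1 \<and> (\<forall>i\<in>{1..r}. 0 \<le> a i)
     \<and> (\<forall>i j. 1 \<le> i \<longrightarrow> i \<le> j \<longrightarrow> j \<le> r \<longrightarrow> a j \<le> a i)
     \<and> (\<Sum>i=1..r. a i) = 1"

text \<open>Entropy; the convention 0 log 0 = 0 holds automatically since 0 * ln 0 = 0.\<close>
definition entropy :: "nat \<Rightarrow> (nat \<Rightarrow> real) \<Rightarrow> real" where
  "entropy r a = - (\<Sum>i=1..r. a i * ln (a i))"

definition entropy' :: "nat \<Rightarrow> (nat \<Rightarrow> real) \<Rightarrow> real" where
  "entropy' r a = - (\<Sum>i=2..r. a i * ln (a i))"

end

theory Submission
  imports Defs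
begin

lemma split_ent:
  assumes "r \<ge> 1"
  shows "entropy r a = - (a 1 * ln (a 1)) + entropy' r a"
    and "(\<Sum>i=1..r. a i) = a 1 + (\<Sum>i=2..r. a i)"
proof -
  have e: "{1..r} = insert 1 {2..r}" using assms by auto
  show "entropy r a = - (a 1 * ln (a 1)) + entropy' r a"
    unfolding entropy_def entropy'_def e by (subst sum.insert) auto
  show "(\<Sum>i=1..r. a i) = a 1 + (\<Sum>i=2..r. a i)"
    unfolding e by (subst sum.insert) auto
qed

lemma term_bound:
  fixes x c :: real
  assumes "0 \<le> x" "x \<le> c" "0 < c"
  shows "- (x * ln x) \<ge> x * (- ln c)"
proof (cases "x = 0")
  case False
  then have x0: "0 < x" using assms by simp
  have "ln x \<le> ln c" using x0 assms ln_le_cancel_iff[of x c] by linarith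
  then show ?thesis using assms by (simp add: mult_left_mono)
qed simp

lemma sum_bound:
  fixes a :: "'b \<Rightarrow> real" and c :: real
  assumes "\<forall>i\<in>S. 0 \<le> a i \<and> a i \<le> c" "0 < c"
  shows "- (\<Sum>i\<in>S. a i * ln (a i)) \<ge> (\<Sum>i\<in>S. a i) * (- ln c)"
proof -
  have "(\<Sum>i\<in>S. a i) * (- ln c) = (\<Sum>i\<in>S. a i * (- ln c))" by (rule sum_distrib_right)
  also have "\<dots> \<le> (\<Sum>i\<in>S. - (a i * ln (a i)))"
  proof (intro sum_mono)
    fix i assume "i \<in> S"
    then have "0 \<le> a i" "a i \<le> c" using assms by auto
    from term_bound[OF this assms(2)] show "a i * - ln c \<le> - (a i * ln (a i))" by simp
  qed
  finally show ?thesis by (simp only: sum_negf)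
qed

lemma h1_nonneg: fixes x :: real assumes "0 \<le> x" "x \<le> 1" shows "0 \<le> - (x * ln x)"
proof (cases "x = 0")
  case False
  then have x0: "0 < x" using assms by simp
  have "ln x \<le> 0" using x0 assms ln_le_zero_iff[of x] by linarith
  then show ?thesis using assms by (simp add: mult_nonneg_nonpos)
qed simp

theorem lemma1:
  shows "(\<forall>\<epsilon>>0. \<exists>\<delta>>0. \<forall>r a. sorted_prob_vec r a \<and> 1 - \<delta> < a 1 \<and> a 1 < 1 \<longrightarrow>
            \<bar>entropy' r a / entropy r a - 1\<bar> < \<epsilon>)
       \<and> (\<forall>\<epsilon>>0. \<exists>\<delta>>0. \<forall>r a. sorted_prob_vec r a \<and> 0 < a 1 \<and> a 1 < \<delta> \<longrightarrow>
            \<bar>entropy' r a / entropy r a - 1\<bar> < \<epsilon>)"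
proof (intro conjI allI impI)
  fix \<epsilon> :: real assume ep: "\<epsilon> > 0"
  show "\<exists>\<delta>>0. \<forall>r a. sorted_prob_vec r a \<and> 1 - \<delta> < a 1 \<and> a 1 < 1 \<longrightarrow>
            \<bar>entropy' r a / entropy r a - 1\<bar> < \<epsilon>"
  proof (intro exI[of _ "exp (-1/\<epsilon>)"] conjI allI impI)
    fix r a assume H: "sorted_prob_vec r a \<and> 1 - exp (-1/\<epsilon>) < a 1 \<and> a 1 < 1"
    define c where "c = 1 - a 1"
    have r1: "r \<ge> 1" and nn: "\<forall>i\<in>{1..r}. 0 \<le> a i" and s: "(\<Sum>i=1..r. a i) = 1"
      using H unfolding sorted_prob_vec_def by auto
    have "exp (-1/\<epsilon>) \<le> 1" using ep by simp
    then have a1pos: "a 1 > 0" using H by linarith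
    have c0: "0 < c" "c < exp (-1/\<epsilon>)" using H c_def by auto
    have s2: "(\<Sum>i=2..r. a i) = c" using split_ent(2)[OF r1, of a] s c_def by simp
    have le: "\<forall>i\<in>{2..r}. 0 \<le> a i \<and> a i \<le> c"
    proof
      fix i assume i: "i \<in> {2..r}"
      have "a i \<le> (\<Sum>j=2..r. a j)"
        by (rule member_le_sum) (use i nn in auto)
      then show "0 \<le> a i \<and> a i \<le> c" using i nn s2 by auto
    qed
    have E': "entropy' r a \<ge> c * (- ln c)"
      using sum_bound[OF le c0(1)] s2 unfolding entropy'_def by simp
    have lnc: "- ln c > 1/\<epsilon>"
    proof -
      have "ln c < ln (exp (-1/\<epsilon>))" using c0 by (subst ln_less_cancel_iff) auto
      then show ?thesis by simp
    qed
    have h1b: "- (a 1 * ln (a 1)) \<le> c"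
    proof -
      have "ln (1 / a 1) \<le> 1 / a 1 - 1" using a1pos by (intro ln_le_minus_one) simp
      then have "ln (a 1) \<ge> 1 - 1 / a 1" using a1pos by (simp add: ln_div)
      then have "a 1 * ln (a 1) \<ge> a 1 * (1 - 1 / a 1)" using a1pos by (simp add: mult_left_mono)
      then show ?thesis using a1pos c_def by (simp add: algebra_simps)
    qed
    have h1n: "0 \<le> - (a 1 * ln (a 1))" using h1_nonneg[of "a 1"] a1pos H by linarith
    have "c * (1/\<epsilon>) < c * (- ln c)" using mult_strict_left_mono[OF lnc c0(1)] .
    then have key: "c < \<epsilon> * (c * (- ln c))" using ep by (simp add: field_simps)
    have Epos: "entropy' r a > 0"
    proof -
      have "0 < - ln c" using lnc ep by (smt (verit) divide_pos_pos zero_less_one)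
      then have "0 < c * (- ln c)" using c0(1) mult_pos_pos[of c "- ln c"] by linarith
      then show ?thesis using E' by linarith
    qed
    define L where "L = entropy r a"
    have L: "L = - (a 1 * ln (a 1)) + entropy' r a" using split_ent(1)[OF r1] L_def by simp
    have Lpos: "L > 0" using L Epos h1n by simp
    have "entropy' r a / L - 1 = - (- (a 1 * ln (a 1))) / L" using Lpos L by (simp add: field_simps)
    moreover have "- (a 1 * ln (a 1)) < \<epsilon> * L"
    proof -
      have "c * - ln c \<le> L" using E' L h1n by linarith
      then have "\<epsilon> * (c * - ln c) \<le> \<epsilon> * L" using ep by (intro mult_left_mono) auto
      then show ?thesis using key h1b by linarith
    qed
    ultimately show "\<bar>entropy' r a / entropy r a - 1\<bar> < \<epsilon>"
      using Lpos h1n L_def by (simp add: field_simps)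
  qed (simp)
next
  fix \<epsilon> :: real assume ep: "\<epsilon> > 0"
  show "\<exists>\<delta>>0. \<forall>r a. sorted_prob_vec r a \<and> 0 < a 1 \<and> a 1 < \<delta> \<longrightarrow>
            \<bar>entropy' r a / entropy r a - 1\<bar> < \<epsilon>"
  proof (intro exI[of _ "min \<epsilon> (1/2)"] conjI allI impI)
    fix r a assume H: "sorted_prob_vec r a \<and> 0 < a 1 \<and> a 1 < min \<epsilon> (1/2)"
    have r1: "r \<ge> 1" and nn: "\<forall>i\<in>{1..r}. 0 \<le> a i" and s: "(\<Sum>i=1..r. a i) = 1"
      and mono: "\<forall>i j. 1 \<le> i \<longrightarrow> i \<le> j \<longrightarrow> j \<le> r \<longrightarrow> a j \<le> a i"
      using H unfolding sorted_prob_vec_def by auto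
    have le: "\<forall>i\<in>{1..r}. 0 \<le> a i \<and> a i \<le> a 1" using nn mono by auto
    have E: "entropy r a \<ge> - ln (a 1)"
      using sum_bound[OF le] H s unfolding entropy_def by simp
    have lneg: "ln (a 1) < 0" using H by simp
    have h1n: "0 \<le> - (a 1 * ln (a 1))" using h1_nonneg H by auto
    have "- (a 1 * ln (a 1)) < \<epsilon> * (- ln (a 1))" using H lneg
      by (simp add: mult_strict_right_mono)
    also have "\<dots> \<le> \<epsilon> * entropy r a" using mult_left_mono[OF E] ep by simp
    finally have k: "- (a 1 * ln (a 1)) < \<epsilon> * entropy r a" .
    define L where "L = entropy r a"
    have L: "L = - (a 1 * ln (a 1)) + entropy' r a" using split_ent(1)[OF r1] L_def by simp
    have Lpos: "L > 0" using E lneg L_def by simp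
    have "entropy' r a / L - 1 = - (- (a 1 * ln (a 1))) / L" using Lpos L by (simp add: field_simps)
    then show "\<bar>entropy' r a / entropy r a - 1\<bar> < \<epsilon>"
      using Lpos h1n k L_def by (simp add: field_simps)
  qed (use ep in simp)
qed

end
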